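(* Assume (H2). Then for any $q,q'\in\mathbb R^d$, $\delta,\delta'>0$ and $T>0$, \[\liminf_{n\to\infty}\inf_{z\in E:|z-nq|<\delta n}\frac1n\log G\bigl(z,nB(q',\delta')\bigr)\ \ge\ \liminf_{n\to\infty}\inf_{z\in E:|z-nq|<\delta n}\frac1n\log\mathbb P_z\bigl(Z(Tn)\in nB(q',\delta'/2)\bigr).\]
   Context: Let $E\subset\mathbb R^d$ be unbounded and $(Z(t))_{t\ge0}$ a continuous-time strong Markov process on $E$ with right-continuous paths having left limits; $\mathbb P_z,\mathbb E_z$ denote probability and expectation given $Z(0)=z$. $G(z,B)=\int_0^\infty\mathbb P_z(Z(t)\in B)\,dt$. For $B\subset\mathbb R^d$ and $n>0$, $nB=\{nx:x\in B\}$; $B(x,r)$ is the open ball of center $x$ and radius $r$. (H2): the function $\hat\varphi(a)=\sup_{z\in E}\sup_{t\in[0,1]}\mathbb E_z(e^{a\cdot(Z(t)-z)})$ is finite for every $a\in\mathbb R^d$. *)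

theory Defs
  imports "HOL-Probability.Probability"
begin

definition eln :: "ennreal \<Rightarrow> ereal" where
  "eln x = (if x = 0 then -\<infinity> else if x = \<infinity> then \<infinity> else ereal (ln (enn2real x)))"

text \<open>M: underlying measurable space; F: filtration (indexed by real time);
  P z: the law P_z (process started at z); Z t \<omega>: position at time t.
  The strong Markov property is stated for finite nonnegative stopping times
  and one-dimensional marginals of the shifted process.\<close>
definition strong_markov_process ::
  "'a::euclidean_space set \<Rightarrow> 'w measure \<Rightarrow> (real \<Rightarrow> 'w measure) \<Rightarrow> ('a \<Rightarrow> 'w measure)
   \<Rightarrow> (real \<Rightarrow> 'w \<Rightarrow> 'a) \<Rightarrow> bool" where
  "strong_markov_process E M F P Z \<longleftrightarrow>
     filtration (space M) F \<and> (\<forall>t. sets (F t) \<subseteq> sets M) \<and>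
     (\<forall>z\<in>E. prob_space (P z) \<and> sets (P z) = sets M) \<and>
     (\<forall>t\<ge>0. Z t \<in> F t \<rightarrow>\<^sub>M borel) \<and>
     (\<forall>\<omega>\<in>space M. \<forall>t\<ge>0. Z t \<omega> \<in> E) \<and>
     (\<forall>z\<in>E. AE \<omega> in P z. Z 0 \<omega> = z) \<and>
     (\<forall>\<omega>\<in>space M. \<forall>t\<ge>0. continuous (at_right t) (\<lambda>s. Z s \<omega>) \<and>
         (t > 0 \<longrightarrow> (\<exists>l. ((\<lambda>s. Z s \<omega>) \<longlongrightarrow> l) (at_left t)))) \<and>
     (\<forall>t\<ge>0. \<forall>B\<in>sets borel.
         (\<lambda>z. measure (P z) {\<omega>\<in>space M. Z t \<omega> \<in> B}) \<in> borel_measurable (restrict_space borel E)) \<and>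
     (\<forall>z\<in>E. \<forall>\<tau>. stopping_time F \<tau> \<and> (\<forall>\<omega>\<in>space M. 0 \<le> \<tau> \<omega>) \<longrightarrow>
        (\<forall>t\<ge>0. \<forall>B\<in>sets borel. \<forall>A\<in>sets (filtration.pre_sigma (space M) F \<tau>).
           measure (P z) (A \<inter> {\<omega>\<in>space M. Z (\<tau> \<omega> + t) \<omega> \<in> B}) =
           (\<integral>\<omega>. indicator A \<omega> * measure (P (Z (\<tau> \<omega>) \<omega>)) {\<omega>'\<in>space M. Z t \<omega>' \<in> B} \<partial>P z)))"

definition green :: "'w measure \<Rightarrow> ('a \<Rightarrow> 'w measure) \<Rightarrow> (real \<Rightarrow> 'w \<Rightarrow> 'a) \<Rightarrow> 'a \<Rightarrow> 'a set \<Rightarrow> ennreal" where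
  "green M P Z z B = (\<integral>\<^sup>+ t\<in>{0..}. emeasure (P z) {\<omega>\<in>space M. Z t \<omega> \<in> B} \<partial>lborel)"

definition H2 :: "'a::euclidean_space set \<Rightarrow> ('a \<Rightarrow> 'w measure) \<Rightarrow> (real \<Rightarrow> 'w \<Rightarrow> 'a) \<Rightarrow> bool" where
  "H2 E P Z \<longleftrightarrow> (\<forall>a. (SUP z\<in>E. SUP t\<in>{0..1}. \<integral>\<^sup>+ \<omega>. ennreal (exp (a \<bullet> (Z t \<omega> - z))) \<partial>P z) < \<infinity>)"

end

theory Submission
  imports Defs
begin

lemma smp_fil:
  assumes "strong_markov_process E M F P Z"
  shows "filtration (space M) F"
  using assms[unfolded strong_markov_process_def] by (elim conjE) assumption

lemma smp_sub:
  assumes "strong_markov_process E M F P Z"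
  shows "\<forall>t. sets (F t) \<subseteq> sets M"
  using assms[unfolded strong_markov_process_def] by (elim conjE) assumption

lemma smp_prob:
  assumes "strong_markov_process E M F P Z"
  shows "\<forall>z\<in>E. prob_space (P z) \<and> sets (P z) = sets M"
  using assms[unfolded strong_markov_process_def] by (elim conjE) assumption

lemma smp_meas:
  assumes "strong_markov_process E M F P Z"
  shows "\<forall>t\<ge>0. Z t \<in> F t \<rightarrow>\<^sub>M borel"
  using assms[unfolded strong_markov_process_def] by (elim conjE) assumption

lemma smp_inE:
  assumes "strong_markov_process E M F P Z"
  shows "\<forall>\<omega>\<in>space M. \<forall>t\<ge>0. Z t \<omega> \<in> E"
  using assms[unfolded strong_markov_process_def] by (elim conjE) assumption

lemma smp_kern:
  assumes "strong_markov_process E M F P Z"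
  shows "\<forall>t\<ge>0. \<forall>B\<in>sets borel.
         (\<lambda>z. measure (P z) {\<omega>\<in>space M. Z t \<omega> \<in> B}) \<in> borel_measurable (restrict_space borel E)"
  using assms[unfolded strong_markov_process_def] by (elim conjE) assumption

lemma smp_strong:
  assumes "strong_markov_process E M F P Z"
  shows "\<forall>z\<in>E. \<forall>\<tau>. stopping_time F \<tau> \<and> (\<forall>\<omega>\<in>space M. 0 \<le> \<tau> \<omega>) \<longrightarrow>
        (\<forall>t\<ge>0. \<forall>B\<in>sets borel. \<forall>A\<in>sets (filtration.pre_sigma (space M) F \<tau>).
           measure (P z) (A \<inter> {\<omega>\<in>space M. Z (\<tau> \<omega> + t) \<omega> \<in> B}) =
           (\<integral>\<omega>. indicator A \<omega> * measure (P (Z (\<tau> \<omega>) \<omega>)) {\<omega>'\<in>space M. Z t \<omega>' \<in> B} \<partial>P z))"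
  using assms[unfolded strong_markov_process_def] by (elim conjE) assumption

lemma smp_basic:
  assumes smp: "strong_markov_process E M F P Z" and y: "y \<in> E" and t: "t \<ge> 0"
  shows "prob_space (P y)" "sets (P y) = sets M" "space (P y) = space M"
    "Z t \<in> borel_measurable (P y)" "Z t \<in> measurable (P y) (restrict_space borel E)"
proof -
  have pp: "prob_space (P y) \<and> sets (P y) = sets M" using smp_prob[OF smp] y by (rule bspec)
  show ps: "prob_space (P y)" using pp by (rule conjunct1)
  show ss: "sets (P y) = sets M" using pp by (rule conjunct2)
  show sp: "space (P y) = space M" using ss by (rule sets_eq_imp_space_eq)
  have fil: "filtration (space M) F" by (rule smp_fil[OF smp])
  have sub: "sets (F t) \<subseteq> sets M" using smp_sub[OF smp] by (rule spec)
  have mz: "Z t \<in> F t \<rightarrow>\<^sub>M borel" using smp_meas[OF smp] t by blast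
  have spF: "space (F t) = space M" using fil by (rule filtration.space_F)
  have "Z t \<in> borel_measurable M"
    by (rule borel_measurable_subalgebra[OF sub spF mz])
  then show zm: "Z t \<in> borel_measurable (P y)" by (simp only: measurable_cong_sets[OF ss refl])
  have inE: "\<forall>\<omega>\<in>space M. Z t \<omega> \<in> E" using smp_inE[OF smp] t by blast
  have "Z t \<in> space (P y) \<rightarrow> E" using inE sp by (simp add: Pi_iff)
  then show "Z t \<in> measurable (P y) (restrict_space borel E)"
    by (rule measurable_restrict_space2[OF _ zm])
qed

lemma scale_ball:
  fixes c :: "'a::real_normed_vector"
  assumes "N > 0"
  shows "(\<lambda>x. N *\<^sub>R x) ` ball c r = ball (N *\<^sub>R c) (N * r)"
proof (intro set_eqI iffI)
  fix x assume "x \<in> (\<lambda>x. N *\<^sub>R x) ` ball c r"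
  then obtain y where xy: "x = N *\<^sub>R y" and d: "dist c y < r" by (metis imageE mem_ball)
  have "dist (N *\<^sub>R c) x = N * dist c y"
    unfolding xy dist_norm scaleR_diff_right[symmetric] using assms by simp
  then show "x \<in> ball (N *\<^sub>R c) (N * r)"
    using assms d by simp
next
  fix x assume x: "x \<in> ball (N *\<^sub>R c) (N * r)"
  define y where "y = (1/N) *\<^sub>R x"
  have xy: "x = N *\<^sub>R y" unfolding y_def using assms by simp
  have "dist (N *\<^sub>R c) x = N * dist c y"
    unfolding xy dist_norm scaleR_diff_right[symmetric] using assms by simp
  then have "dist c y < r" using x assms by simp
  then show "x \<in> (\<lambda>x. N *\<^sub>R x) ` ball c r" unfolding xy by auto
qed

lemma markov_step:
  assumes smp: "strong_markov_process E M F P Z" and z: "z \<in> E" and \<tau>: "\<tau> \<ge> 0" and s: "s \<ge> 0"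
    and B: "B \<in> sets borel"
  shows "measure (P z) {\<omega>\<in>space M. Z (\<tau> + s) \<omega> \<in> B} =
           (\<integral>\<omega>. measure (P (Z \<tau> \<omega>)) {\<omega>'\<in>space M. Z s \<omega>' \<in> B} \<partial>P z)"
    and "integrable (P z) (\<lambda>\<omega>. measure (P (Z \<tau> \<omega>)) {\<omega>'\<in>space M. Z s \<omega>' \<in> B})"
proof -
  have fil: "filtration (space M) F" using smp_fil[OF smp] .
  have st: "stopping_time F (\<lambda>_. \<tau>)" by (rule stopping_time_const)
  have sm: "space M \<in> sets (filtration.pre_sigma (space M) F (\<lambda>_. \<tau>))"
    using sets.top[of "filtration.pre_sigma (space M) F (\<lambda>_. \<tau>)"]
    by (simp add: filtration.space_pre_sigma[OF fil])
  have stt: "stopping_time F (\<lambda>_. \<tau>) \<and> (\<forall>\<omega>\<in>space M. 0 \<le> \<tau>)" using st \<tau> by simp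
  have HH: "\<forall>t\<ge>0. \<forall>B\<in>sets borel. \<forall>A\<in>sets (filtration.pre_sigma (space M) F (\<lambda>_. \<tau>)).
           measure (P z) (A \<inter> {\<omega>\<in>space M. Z (\<tau> + t) \<omega> \<in> B}) =
           (\<integral>\<omega>. indicator A \<omega> * measure (P (Z \<tau> \<omega>)) {\<omega>'\<in>space M. Z t \<omega>' \<in> B} \<partial>P z)"
    using mp[OF spec[OF bspec[OF smp_strong[OF smp] z], of "\<lambda>_. \<tau>"] stt] by simp
  have eq: "measure (P z) (space M \<inter> {\<omega>\<in>space M. Z (\<tau> + s) \<omega> \<in> B}) =
           (\<integral>\<omega>. indicator (space M) \<omega> * measure (P (Z \<tau> \<omega>)) {\<omega>'\<in>space M. Z s \<omega>' \<in> B} \<partial>P z)"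
    using HH[rule_format, OF s B sm] .
  have sp: "space (P z) = space M" using smp_basic[OF smp z \<tau>] by simp
  have "(\<integral>\<omega>. indicator (space M) \<omega> * measure (P (Z \<tau> \<omega>)) {\<omega>'\<in>space M. Z s \<omega>' \<in> B} \<partial>P z)
      = (\<integral>\<omega>. measure (P (Z \<tau> \<omega>)) {\<omega>'\<in>space M. Z s \<omega>' \<in> B} \<partial>P z)"
    by (rule Bochner_Integration.integral_cong) (auto simp: sp)
  moreover have "space M \<inter> {\<omega>\<in>space M. Z (\<tau> + s) \<omega> \<in> B} = {\<omega>\<in>space M. Z (\<tau> + s) \<omega> \<in> B}" by auto
  ultimately show "measure (P z) {\<omega>\<in>space M. Z (\<tau> + s) \<omega> \<in> B} =
           (\<integral>\<omega>. measure (P (Z \<tau> \<omega>)) {\<omega>'\<in>space M. Z s \<omega>' \<in> B} \<partial>P z)" using eq by simp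
  have gm: "(\<lambda>y. measure (P y) {\<omega>\<in>space M. Z s \<omega> \<in> B}) \<in> borel_measurable (restrict_space borel E)"
    using smp_kern[OF smp] s B by blast
  have ps: "prob_space (P z)" using smp_basic[OF smp z \<tau>] by simp
  show "integrable (P z) (\<lambda>\<omega>. measure (P (Z \<tau> \<omega>)) {\<omega>'\<in>space M. Z s \<omega>' \<in> B})"
  proof (rule finite_measure.integrable_const_bound[where B=1])
    show "finite_measure (P z)" using ps by (simp add: prob_space.finite_measure)
    show "AE x in P z. norm (measure (P (Z \<tau> x)) {\<omega>'\<in>space M. Z s \<omega>' \<in> B}) \<le> 1"
    proof (rule AE_I2)
      fix x assume "x \<in> space (P z)"
      then have "Z \<tau> x \<in> E" using smp_inE[OF smp] \<tau> sp by auto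
      then have "prob_space (P (Z \<tau> x))" using smp_prob[OF smp] by auto
      then show "norm (measure (P (Z \<tau> x)) {\<omega>'\<in>space M. Z s \<omega>' \<in> B}) \<le> 1"
        using prob_space.prob_le_1 measure_nonneg by (metis abs_of_nonneg real_norm_def)
    qed
    show "(\<lambda>\<omega>. measure (P (Z \<tau> \<omega>)) {\<omega>'\<in>space M. Z s \<omega>' \<in> B}) \<in> borel_measurable (P z)"
      using measurable_comp[OF smp_basic(5)[OF smp z \<tau>] gm] unfolding o_def .
  qed
qed

lemma exp_abs_le: "exp \<bar>u::real\<bar> \<le> exp u + exp (-u)"
  by (cases "u \<ge> 0") (auto simp: add_increasing add_increasing2)

lemma basis_max:
  fixes X :: "'a::euclidean_space"
  shows "\<exists>b\<in>Basis. norm X \<le> real DIM('a) * \<bar>X \<bullet> b\<bar>"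
proof -
  define m where "m = Max ((\<lambda>b. \<bar>X \<bullet> b\<bar>) ` Basis)"
  have "m \<in> (\<lambda>b. \<bar>X \<bullet> b\<bar>) ` Basis" unfolding m_def by (intro Max_in) auto
  then obtain b0 where b0: "b0 \<in> Basis" "m = \<bar>X \<bullet> b0\<bar>" by auto
  have "norm X \<le> (\<Sum>b\<in>Basis. \<bar>X \<bullet> b\<bar>)" by (rule norm_le_l1)
  also have "\<dots> \<le> of_nat (card (Basis::'a set)) * m"
    by (rule sum_bounded_above) (auto simp: m_def)
  finally show ?thesis using b0 by auto
qed

lemma tail_bound:
  fixes E :: "'a::euclidean_space set"
  assumes smp: "strong_markov_process E M F P Z" and h2: "H2 E P Z" and lam: "la > 0"
  shows "\<exists>K\<ge>0. \<forall>y\<in>E. \<forall>s\<in>{0..1}. \<forall>r. measure (P y) {\<omega>\<in>space M. r \<le> norm (Z s \<omega> - y)} \<le> K * exp (- la * r)"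
proof -
  define D where "D = real DIM('a)"
  define H where "H a = (SUP z\<in>E. SUP t\<in>{0..1}. \<integral>\<^sup>+ \<omega>. ennreal (exp (a \<bullet> (Z t \<omega> - z))) \<partial>P z)" for a
  define K where "K = (\<Sum>b\<in>Basis. H ((la*D) *\<^sub>R b) + H (- ((la*D) *\<^sub>R b)))"
  have Hall: "\<forall>a. H a < \<infinity>" using h2 unfolding H2_def H_def .
  have Hfin: "H a < \<infinity>" for a using Hall by (rule spec)
  have Kfin: "K < \<infinity>" unfolding K_def using Hfin by simp
  have main: "measure (P y) {\<omega>\<in>space M. r \<le> norm (Z s \<omega> - y)} \<le> enn2real K * exp (- la * r)"
    if y: "y \<in> E" and s: "s \<in> {0..1}" for y s r
  proof -
    have s0: "s \<ge> 0" using s by simp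
    note bas = smp_basic[OF smp y s0]
    interpret prob_space "P y" by (rule bas(1))
    define S where "S = {\<omega>\<in>space M. r \<le> norm (Z s \<omega> - y)}"
    have Sm: "S \<in> sets (P y)"
    proof -
      have "S = {\<omega>\<in>space (P y). r \<le> norm (Z s \<omega> - y)}" using bas S_def by simp
      also have "\<dots> \<in> sets (P y)" using bas(4) by measurable
      finally show ?thesis .
    qed
    define f where "f b \<omega> = ennreal (exp (((la*D) *\<^sub>R b) \<bullet> (Z s \<omega> - y))) + ennreal (exp ((- ((la*D) *\<^sub>R b)) \<bullet> (Z s \<omega> - y)))" for b \<omega>
    have em: "(\<lambda>\<omega>. ennreal (exp (a \<bullet> (Z s \<omega> - y)))) \<in> borel_measurable (P y)" for a
      using bas(4) by measurable
    have fm: "f b \<in> borel_measurable (P y)" for b unfolding f_def using bas(4) by measurable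
    have pt: "ennreal (exp (la * r)) * indicator S \<omega> \<le> (\<Sum>b\<in>Basis. f b \<omega>)" for \<omega>
    proof (cases "\<omega> \<in> S")
      case False then show ?thesis by simp
    next
      case True
      then have rn: "r \<le> norm (Z s \<omega> - y)" by (simp add: S_def)
      obtain b where b: "b \<in> Basis" "norm (Z s \<omega> - y) \<le> D * \<bar>(Z s \<omega> - y) \<bullet> b\<bar>"
        using basis_max[of "Z s \<omega> - y"] unfolding D_def by blast
      define u where "u = ((la*D) *\<^sub>R b) \<bullet> (Z s \<omega> - y)"
      have "la * r \<le> la * (D * \<bar>(Z s \<omega> - y) \<bullet> b\<bar>)" using rn b lam by (intro mult_left_mono) auto
      also have "\<dots> = \<bar>u\<bar>" using lam unfolding u_def D_def by (simp add: abs_mult inner_commute)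
      finally have "exp (la * r) \<le> exp \<bar>u\<bar>" by simp
      then have "exp (la * r) \<le> exp u + exp (-u)" using exp_abs_le[of u] by linarith
      then have "ennreal (exp (la * r)) \<le> f b \<omega>" unfolding f_def u_def
        by (simp add: ennreal_plus[symmetric] del: ennreal_plus)
      also have "\<dots> \<le> (\<Sum>b\<in>Basis. f b \<omega>)" using b by (intro member_le_sum) auto
      finally show ?thesis using True by simp
    qed
    have "ennreal (exp (la * r)) * emeasure (P y) S = (\<integral>\<^sup>+ \<omega>. ennreal (exp (la * r)) * indicator S \<omega> \<partial>P y)"
      using Sm by (simp add: nn_integral_cmult_indicator)
    also have "\<dots> \<le> (\<integral>\<^sup>+ \<omega>. (\<Sum>b\<in>Basis. f b \<omega>) \<partial>P y)" by (intro nn_integral_mono pt)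
    also have "\<dots> = (\<Sum>b\<in>Basis. \<integral>\<^sup>+ \<omega>. f b \<omega> \<partial>P y)" using fm by (intro nn_integral_sum) auto
    also have "\<dots> \<le> K" unfolding K_def
    proof (intro sum_mono)
      fix b :: 'a assume "b \<in> Basis"
      have ub: "(\<integral>\<^sup>+ \<omega>. ennreal (exp (a \<bullet> (Z s \<omega> - y))) \<partial>P y) \<le> H a" for a
        unfolding H_def by (rule SUP_upper2[OF y], rule SUP_upper[OF s])
      have "(\<integral>\<^sup>+ \<omega>. f b \<omega> \<partial>P y) = (\<integral>\<^sup>+ \<omega>. ennreal (exp (((la*D) *\<^sub>R b) \<bullet> (Z s \<omega> - y))) \<partial>P y) + (\<integral>\<^sup>+ \<omega>. ennreal (exp ((- ((la*D) *\<^sub>R b)) \<bullet> (Z s \<omega> - y))) \<partial>P y)"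
        unfolding f_def by (intro nn_integral_add em)
      also have "\<dots> \<le> H ((la*D) *\<^sub>R b) + H (- ((la*D) *\<^sub>R b))" by (intro add_mono ub)
      finally show "(\<integral>\<^sup>+ \<omega>. f b \<omega> \<partial>P y) \<le> H ((la*D) *\<^sub>R b) + H (- ((la*D) *\<^sub>R b))" .
    qed
    finally have le: "ennreal (exp (la * r)) * emeasure (P y) S \<le> K" .
    have "ennreal (exp (la * r) * measure (P y) S) \<le> ennreal (enn2real K)"
      using le Kfin by (simp add: emeasure_eq_measure ennreal_mult' less_top)
    then have "exp (la * r) * measure (P y) S \<le> enn2real K"
      by (simp add: ennreal_le_iff enn2real_nonneg)
    then have "measure (P y) S \<le> enn2real K / exp (la * r)" by (simp add: field_simps)
    then show ?thesis unfolding S_def by (simp add: exp_minus field_simps)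
  qed
  show ?thesis using main by (intro exI[of _ "enn2real K"]) auto
qed

lemma shift_lower:
  fixes E :: "'a::euclidean_space set"
  assumes smp: "strong_markov_process E M F P Z" and z: "z \<in> E" and \<tau>: "\<tau> \<ge> 0" and s: "s \<in> {0..1}"
    and tail: "\<forall>y\<in>E. \<forall>s\<in>{0..1}. \<forall>r. measure (P y) {\<omega>\<in>space M. r \<le> norm (Z s \<omega> - y)} \<le> K * exp (- la * r)"
  shows "measure (P z) {\<omega>\<in>space M. Z \<tau> \<omega> \<in> ball c \<rho>} - K * exp (- la * \<rho>)
         \<le> measure (P z) {\<omega>\<in>space M. Z (\<tau> + s) \<omega> \<in> ball c (2 * \<rho>)}"
proof -
  have s0: "s \<ge> 0" using s by simp
  note bas = smp_basic[OF smp z \<tau>]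
  interpret prob_space "P z" by (rule bas(1))
  define \<epsilon> where "\<epsilon> = K * exp (- la * \<rho>)"
  define g where "g y = measure (P y) {\<omega>\<in>space M. Z s \<omega> \<in> ball c (2 * \<rho>)}" for y
  have B: "ball c (2 * \<rho>) \<in> sets borel" by simp
  note ms = markov_step[OF smp z \<tau> s0 B]
  define A where "A = {\<omega>\<in>space M. Z \<tau> \<omega> \<in> ball c \<rho>}"
  have Am: "A \<in> sets (P z)"
  proof -
    have "A = Z \<tau> -` ball c \<rho> \<inter> space (P z)" unfolding A_def using bas by auto
    also have "\<dots> \<in> sets (P z)" by (rule measurable_sets[OF bas(4)]) simp
    finally show ?thesis .
  qed
  have gpos: "0 \<le> g y" for y unfolding g_def by simp
  have glow: "1 - \<epsilon> \<le> g y" if y: "y \<in> E" "y \<in> ball c \<rho>" for y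
  proof -
    interpret Py: prob_space "P y" using smp_prob[OF smp] y by auto
    have spy: "space (P y) = space M" using smp_basic[OF smp y(1) \<tau>] by simp
    have sy: "sets (P y) = sets M" using smp_basic[OF smp y(1) \<tau>] by simp
    note by4 = smp_basic(4)[OF smp y(1) s0]
    have m1: "{\<omega>\<in>space M. Z s \<omega> \<in> ball c (2 * \<rho>)} \<in> sets (P y)"
    proof -
      have "{\<omega>\<in>space M. Z s \<omega> \<in> ball c (2 * \<rho>)} = Z s -` ball c (2 * \<rho>) \<inter> space (P y)" using spy by auto
      also have "\<dots> \<in> sets (P y)" by (rule measurable_sets[OF by4]) simp
      finally show ?thesis .
    qed
    have m2: "{\<omega>\<in>space M. \<rho> \<le> norm (Z s \<omega> - y)} \<in> sets (P y)"
    proof -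
      have "{\<omega>\<in>space M. \<rho> \<le> norm (Z s \<omega> - y)} = {\<omega>\<in>space (P y). \<rho> \<le> norm (Z s \<omega> - y)}" using spy by auto
      also have "\<dots> \<in> sets (P y)" using by4 by measurable
      finally show ?thesis .
    qed
    have sub: "space (P y) \<subseteq> {\<omega>\<in>space M. Z s \<omega> \<in> ball c (2 * \<rho>)} \<union> {\<omega>\<in>space M. \<rho> \<le> norm (Z s \<omega> - y)}"
    proof
      fix \<omega> assume w: "\<omega> \<in> space (P y)"
      show "\<omega> \<in> {\<omega>\<in>space M. Z s \<omega> \<in> ball c (2 * \<rho>)} \<union> {\<omega>\<in>space M. \<rho> \<le> norm (Z s \<omega> - y)}"
      proof (cases "Z s \<omega> \<in> ball c (2 * \<rho>)")
        case True then show ?thesis using w spy by auto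
      next
        case False
        then have "2 * \<rho> \<le> dist c (Z s \<omega>)" by simp
        moreover have "dist c y < \<rho>" using y by simp
        moreover have "dist c (Z s \<omega>) \<le> dist c y + dist y (Z s \<omega>)" by (rule dist_triangle)
        ultimately have "\<rho> \<le> norm (Z s \<omega> - y)" by (simp add: dist_norm norm_minus_commute)
        then show ?thesis using w spy by auto
      qed
    qed
    have "1 = measure (P y) (space (P y))" using Py.prob_space by simp
    also have "\<dots> \<le> measure (P y) ({\<omega>\<in>space M. Z s \<omega> \<in> ball c (2 * \<rho>)} \<union> {\<omega>\<in>space M. \<rho> \<le> norm (Z s \<omega> - y)})"
      using m1 m2 sub by (intro Py.finite_measure_mono) auto
    also have "\<dots> \<le> g y + measure (P y) {\<omega>\<in>space M. \<rho> \<le> norm (Z s \<omega> - y)}"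
      unfolding g_def using m1 m2 by (intro measure_subadditive) (auto simp: Py.emeasure_eq_measure)
    also have "\<dots> \<le> g y + \<epsilon>" unfolding \<epsilon>_def using tail[rule_format, OF y(1) s, of \<rho>] by simp
    finally show ?thesis by simp
  qed
  have pw: "indicator A \<omega> - \<epsilon> \<le> g (Z \<tau> \<omega>)" if w: "\<omega> \<in> space (P z)" for \<omega>
  proof (cases "\<omega> \<in> A")
    case True
    then have "Z \<tau> \<omega> \<in> E" "Z \<tau> \<omega> \<in> ball c \<rho>" using smp_inE[OF smp] \<tau> unfolding A_def by auto
    then have "1 - \<epsilon> \<le> g (Z \<tau> \<omega>)" by (rule glow)
    then show ?thesis using True by simp
  next
    case False
    have "0 \<le> measure (P z) {\<omega>\<in>space M. \<rho> \<le> norm (Z s \<omega> - z)}" by simp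
    then have "0 \<le> \<epsilon>" unfolding \<epsilon>_def using tail[rule_format, OF z s, of \<rho>] by linarith
    then show ?thesis using False gpos[of "Z \<tau> \<omega>"] by simp
  qed
  have i1: "integrable (P z) (indicator A :: _ \<Rightarrow> real)"
    by (rule integrable_real_indicator[OF Am]) (simp add: emeasure_eq_measure)
  have i2: "integrable (P z) (\<lambda>\<omega>. indicator A \<omega> - \<epsilon>)"
    by (rule Bochner_Integration.integrable_diff[OF i1 integrable_const])
  have AA: "A \<inter> space (P z) = A" using sets.sets_into_space[OF Am] by blast
  have "measure (P z) A - \<epsilon> = (\<integral>\<omega>. indicator A \<omega> \<partial>P z) - (\<integral>\<omega>. \<epsilon> \<partial>P z)"
    by (simp add: AA prob_space)
  also have "\<dots> = (\<integral>\<omega>. indicator A \<omega> - \<epsilon> \<partial>P z)"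
    by (rule Bochner_Integration.integral_diff[OF i1 integrable_const, symmetric])
  also have "\<dots> \<le> (\<integral>\<omega>. g (Z \<tau> \<omega>) \<partial>P z)"
    by (rule integral_mono[OF i2 ms(2)[folded g_def]]) (rule pw)
  also have "\<dots> = measure (P z) {\<omega>\<in>space M. Z (\<tau> + s) \<omega> \<in> ball c (2 * \<rho>)}"
    using ms(1) unfolding g_def by simp
  finally show ?thesis unfolding A_def \<epsilon>_def .
qed

lemma green_lower:
  assumes smp: "strong_markov_process E M F P Z" and z: "z \<in> E" and \<tau>: "\<tau> \<ge> 0"
    and low: "\<forall>s\<in>{0..1}. c \<le> measure (P z) {\<omega>\<in>space M. Z (\<tau> + s) \<omega> \<in> B}"
  shows "ennreal c \<le> green M P Z z B"
proof -
  interpret prob_space "P z" using smp_prob[OF smp] z by auto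
  have "ennreal c = (\<integral>\<^sup>+ t. ennreal c * indicator {\<tau>..\<tau>+1} t \<partial>lborel)"
    by (simp add: nn_integral_cmult_indicator)
  also have "\<dots> \<le> (\<integral>\<^sup>+ t. emeasure (P z) {\<omega>\<in>space M. Z t \<omega> \<in> B} * indicator {0..} t \<partial>lborel)"
  proof (intro nn_integral_mono)
    fix t :: real
    show "ennreal c * indicator {\<tau>..\<tau>+1} t \<le> emeasure (P z) {\<omega>\<in>space M. Z t \<omega> \<in> B} * indicator {0..} t"
    proof (cases "t \<in> {\<tau>..\<tau>+1}")
      case True
      then have "t - \<tau> \<in> {0..1}" "t \<ge> 0" using \<tau> by auto
      then have "c \<le> measure (P z) {\<omega>\<in>space M. Z t \<omega> \<in> B}" using bspec[OF low, of "t - \<tau>"] by simp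
      then show ?thesis using True \<open>t \<ge> 0\<close> by (simp add: emeasure_eq_measure ennreal_leI)
    qed simp
  qed
  also have "\<dots> = green M P Z z B" unfolding green_def by simp
  finally show ?thesis .
qed

lemma eln_upper_prob:
  assumes ps: "prob_space Q" and N: "N > 0" and lt: "ereal c < ereal (1 / N) * eln (emeasure Q A)"
  shows "exp (N * c) < measure Q A"
proof -
  interpret prob_space Q by (rule ps)
  have em: "emeasure Q A = ennreal (measure Q A)" by (rule emeasure_eq_measure)
  show ?thesis
  proof (cases "measure Q A = 0")
    case True
    then have "eln (emeasure Q A) = -\<infinity>" using em by (simp add: eln_def)
    then have m: "ereal (1 / N) * eln (emeasure Q A) = -\<infinity>" using N by simp
    show ?thesis using lt unfolding m by simp
  next
    case False
    then have pos: "measure Q A > 0" using measure_nonneg[of Q A] by linarith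
    then have "eln (emeasure Q A) = ereal (ln (measure Q A))" using em by (simp add: eln_def)
    then have "c < ln (measure Q A) / N" using lt by simp
    then have "N * c < ln (measure Q A)" using N by (simp add: field_simps)
    then have "exp (N * c) < exp (ln (measure Q A))" by simp
    then show ?thesis using pos by simp
  qed
qed

lemma eln_lower:
  assumes N: "N > 0" and le: "ennreal (exp (N * c)) \<le> G"
  shows "ereal c \<le> ereal (1 / N) * eln G"
proof (cases "G = \<infinity>")
  case True then show ?thesis using N by (simp add: eln_def)
next
  case False
  have Gpos: "G \<noteq> 0"
  proof
    assume "G = 0"
    then have "ennreal (exp (N * c)) = 0" using le by simp
    then show False by simp
  qed
  have Geq: "ennreal (enn2real G) = G" using False by (simp add: less_top)
  have "ennreal (exp (N * c)) \<le> ennreal (enn2real G)" using le Geq by simp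
  then have r: "exp (N * c) \<le> enn2real G" by (simp add: ennreal_le_iff)
  have eq: "eln G = ereal (ln (enn2real G))" using False Gpos by (simp add: eln_def)
  have gp: "0 < enn2real G" using r exp_gt_zero[of "N * c"] by linarith
  have "N * c \<le> ln (enn2real G)" using r gp by (simp add: ln_ge_iff)
  then have "c \<le> ln (enn2real G) / N" using N by (simp add: field_simps)
  then show ?thesis unfolding eq by simp
qed

lemma ev_big:
  assumes "\<alpha> > 0"
  shows "eventually (\<lambda>n::nat. X \<le> \<alpha> * real n) sequentially"
proof -
  obtain m :: nat where m: "X / \<alpha> \<le> real m" using real_arch_simple by blast
  show ?thesis unfolding eventually_sequentially
  proof (intro exI allI impI)
    fix n assume "m \<le> n"
    then have "X / \<alpha> \<le> real n" using m by (meson of_nat_le_iff order_trans)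
    then show "X \<le> \<alpha> * real n" using assms by (simp add: field_simps)
  qed
qed

theorem mainTheorem8:
  fixes E :: "'a::euclidean_space set" and M :: "'w measure" and F :: "real \<Rightarrow> 'w measure"
    and P :: "'a \<Rightarrow> 'w measure" and Z :: "real \<Rightarrow> 'w \<Rightarrow> 'a"
    and q q' :: 'a and \<delta> \<delta>' T :: real
  assumes "\<not> bounded E"
    and "strong_markov_process E M F P Z"
    and "H2 E P Z"
    and "\<delta> > 0" and "\<delta>' > 0" and "T > 0"
  shows "liminf (\<lambda>n::nat. INF z\<in>{z\<in>E. norm (z - real n *\<^sub>R q) < \<delta> * real n}.
             ereal (1 / real n) * eln (green M P Z z ((\<lambda>x. real n *\<^sub>R x) ` ball q' \<delta>')))
         \<ge> liminf (\<lambda>n::nat. INF z\<in>{z\<in>E. norm (z - real n *\<^sub>R q) < \<delta> * real n}.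
             ereal (1 / real n) * eln (emeasure (P z) {\<omega>\<in>space M. Z (T * real n) \<omega> \<in> (\<lambda>x. real n *\<^sub>R x) ` ball q' (\<delta>' / 2)}))"
    (is "liminf ?a \<ge> liminf ?b")
proof (rule dense_le)
  note smp = assms(2) and h2 = assms(3) and dpos = assms(5) and Tpos = assms(6)
  fix x assume x: "x < liminf ?b"
  show "x \<le> liminf ?a"
  proof (cases x)
    case MInf then show ?thesis by simp
  next
    case PInf then show ?thesis using x by simp
  next
    case (real c)
    obtain x' where x': "x < x'" "x' < liminf ?b" using dense[OF x] by blast
    have "x' \<noteq> \<infinity>" "x' \<noteq> -\<infinity>" using x' by auto
    then obtain c' where c': "x' = ereal c'" by (cases x') auto
    have cc': "c < c'" using x' real c' by simp
    define la where "la = 2 * (\<bar>c'\<bar> + 1) / \<delta>'"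
    have la: "la > 0" unfolding la_def using dpos by simp
    obtain K where K: "K \<ge> 0" and tail: "\<forall>y\<in>E. \<forall>s\<in>{0..1}. \<forall>r. measure (P y) {\<omega>\<in>space M. r \<le> norm (Z s \<omega> - y)} \<le> K * exp (- la * r)"
      using tail_bound[OF smp h2 la] by blast
    define \<alpha> where "\<alpha> = c' - c"
    define \<beta> where "\<beta> = \<bar>c'\<bar> + 1 + c'"
    have ab: "\<alpha> > 0" "\<beta> > 0" unfolding \<alpha>_def \<beta>_def using cc' by auto
    have ev1: "eventually (\<lambda>n::nat. ereal c' < ?b n) sequentially"
      using less_LiminfD[of x' sequentially ?b] x'(2) c' by simp
    have ev2: "eventually (\<lambda>n::nat. ln 2 \<le> \<alpha> * real n) sequentially" by (rule ev_big[OF ab(1)])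
    have ev3: "eventually (\<lambda>n::nat. ln (2 * K + 1) \<le> \<beta> * real n) sequentially" by (rule ev_big[OF ab(2)])
    have ev4: "eventually (\<lambda>n::nat. 1 \<le> n) sequentially" by (rule eventually_ge_at_top)
    have "eventually (\<lambda>n. ereal c \<le> ?a n) sequentially"
      using ev1 ev2 ev3 ev4
    proof eventually_elim
      case (elim n)
      define N where "N = real n"
      have N: "N > 0" using elim(4) unfolding N_def by simp
      have e1: "exp (N * c) \<le> exp (N * c') / 2"
      proof -
        have "exp (N * c) = exp (N * c') * exp (- (\<alpha> * N))" unfolding \<alpha>_def
          by (simp add: exp_add[symmetric] algebra_simps)
        also have "exp (- (\<alpha> * N)) \<le> 1 / 2"
        proof -
          have "exp (\<alpha> * N) \<ge> exp (ln 2)" using elim(2) unfolding N_def by (simp only: exp_le_cancel_iff)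
          then have "exp (\<alpha> * N) \<ge> 2" by simp
          then show ?thesis by (simp add: exp_minus field_simps)
        qed
        then have "exp (N * c') * exp (- (\<alpha> * N)) \<le> exp (N * c') * (1/2)" by (intro mult_left_mono) auto
        finally show ?thesis by simp
      qed
      have e2: "K * exp (- la * (N * (\<delta>' / 2))) \<le> exp (N * c') / 2"
      proof -
        have "la * (N * (\<delta>' / 2)) = (\<bar>c'\<bar> + 1) * N" unfolding la_def using dpos by (simp add: field_simps)
        then have h1: "- la * (N * (\<delta>' / 2)) = - ((\<bar>c'\<bar> + 1) * N)" by simp
        have h2: "- ((\<bar>c'\<bar> + 1) * N) = N * c' + - (\<beta> * N)" unfolding \<beta>_def by (simp add: algebra_simps)
        have "K * exp (- la * (N * (\<delta>' / 2))) = K * (exp (N * c') * exp (- (\<beta> * N)))"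
          by (simp only: h1 h2 exp_add)
        also have "\<dots> = exp (N * c') * (K * exp (- (\<beta> * N)))" by (simp only: mult.left_commute)
        also have "K * exp (- (\<beta> * N)) \<le> 1 / 2"
        proof -
          have "exp (\<beta> * N) \<ge> exp (ln (2 * K + 1))" using elim(3) unfolding N_def by (simp only: exp_le_cancel_iff)
          then have "exp (\<beta> * N) \<ge> 2 * K + 1" using K by simp
          then have "2 * K \<le> exp (\<beta> * N)" by simp
          then show ?thesis by (simp add: exp_minus field_simps)
        qed
        then have "exp (N * c') * (K * exp (- (\<beta> * N))) \<le> exp (N * c') * (1/2)" by (intro mult_left_mono) auto
        finally show ?thesis by simp
      qed
      show "ereal c \<le> ?a n"
      proof (rule INF_greatest)
        fix z assume zS: "z \<in> {z\<in>E. norm (z - real n *\<^sub>R q) < \<delta> * real n}"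
        then have z: "z \<in> E" by simp
        have imgh: "(\<lambda>x. N *\<^sub>R x) ` ball q' (\<delta>' / 2) = ball (N *\<^sub>R q') (N * (\<delta>' / 2))" by (rule scale_ball[OF N])
        have img: "(\<lambda>x. N *\<^sub>R x) ` ball q' \<delta>' = ball (N *\<^sub>R q') (2 * (N * (\<delta>' / 2)))"
          using scale_ball[OF N, of q' \<delta>'] by simp
        have ps: "prob_space (P z)" using smp_prob[OF smp] z by auto
        have "ereal c' < ?b n" using elim(1) .
        also have "?b n \<le> ereal (1 / N) * eln (emeasure (P z) {\<omega>\<in>space M. Z (T * N) \<omega> \<in> (\<lambda>x. N *\<^sub>R x) ` ball q' (\<delta>' / 2)})"
          unfolding N_def by (rule INF_lower[OF zS])
        finally have "exp (N * c') < measure (P z) {\<omega>\<in>space M. Z (T * N) \<omega> \<in> (\<lambda>x. N *\<^sub>R x) ` ball q' (\<delta>' / 2)}"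
          by (rule eln_upper_prob[OF ps N])
        then have pb: "exp (N * c') < measure (P z) {\<omega>\<in>space M. Z (T * N) \<omega> \<in> ball (N *\<^sub>R q') (N * (\<delta>' / 2))}"
          unfolding imgh .
        have TN: "T * N \<ge> 0" using Tpos N by simp
        have low: "\<forall>s\<in>{0..1}. exp (N * c) \<le> measure (P z) {\<omega>\<in>space M. Z (T * N + s) \<omega> \<in> (\<lambda>x. N *\<^sub>R x) ` ball q' \<delta>'}"
        proof
          fix s :: real assume s: "s \<in> {0..1}"
          have "exp (N * c) \<le> exp (N * c') - K * exp (- la * (N * (\<delta>' / 2)))" using e1 e2 by simp
          also have "\<dots> \<le> measure (P z) {\<omega>\<in>space M. Z (T * N) \<omega> \<in> ball (N *\<^sub>R q') (N * (\<delta>' / 2))} - K * exp (- la * (N * (\<delta>' / 2)))"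
            using pb by simp
          also have "\<dots> \<le> measure (P z) {\<omega>\<in>space M. Z (T * N + s) \<omega> \<in> ball (N *\<^sub>R q') (2 * (N * (\<delta>' / 2)))}"
            by (rule shift_lower[OF smp z TN s tail])
          finally show "exp (N * c) \<le> measure (P z) {\<omega>\<in>space M. Z (T * N + s) \<omega> \<in> (\<lambda>x. N *\<^sub>R x) ` ball q' \<delta>'}"
            unfolding img .
        qed
        have "ennreal (exp (N * c)) \<le> green M P Z z ((\<lambda>x. N *\<^sub>R x) ` ball q' \<delta>')"
          by (rule green_lower[OF smp z TN low])
        then show "ereal c \<le> ereal (1 / real n) * eln (green M P Z z ((\<lambda>x. real n *\<^sub>R x) ` ball q' \<delta>'))"
          using eln_lower[OF N] unfolding N_def by blast
      qed
    qed
    then have "ereal c \<le> liminf ?a" by (rule Liminf_bounded)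
    then show ?thesis using real by simp
  qed
qed

end
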